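(* For every knot type $[K]$, $\dfrac{3+\sqrt{9+8\,c[K]}}{2}\le \mathrm{pl}[K]$, where $c[K]$ is the crossing number of $[K]$.
   Context: The crossing number $c[K]$ is the minimum number of crossings in a diagram of $[K]$. A planar stick diagram of $[K]$ is a closed polygonal curve in the plane (finitely many straight line segments, called edges, joined end to end), whose self-intersections are transverse double points in the interiors of edges, with over/under crossing information at each self-intersection, representing $[K]$. The planar stick index $\mathrm{pl}[K]$ is the smallest number of edges in any planar stick diagram of $[K]$. *)

theory Defs
  imports "HOL-Analysis.Analysis"
begin

type_synonym R2 = "real \<times> real"
type_synonym R3 = "real \<times> real \<times> real"

text \<open>Closed polygonal curve through the vertex list ps, parametrised on [0, length ps]
  (parameter interval [i, i+1] traverses the edge from ps!i to ps!((i+1) mod n)).\<close>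
definition poly_path :: "'a::real_vector list \<Rightarrow> real \<Rightarrow> 'a" where
  "poly_path ps t = (let n = length ps; i = nat \<lfloor>t\<rfloor> mod n; s = t - of_int \<lfloor>t\<rfloor>
     in (1 - s) *\<^sub>R (ps ! i) + s *\<^sub>R (ps ! ((i + 1) mod n)))"

definition polygonal_knot :: "R3 set \<Rightarrow> bool" where
  "polygonal_knot K \<longleftrightarrow> (\<exists>qs :: R3 list. length qs \<ge> 3 \<and>
      inj_on (poly_path qs) {0..<real (length qs)} \<and>
      K = poly_path qs ` {0..real (length qs)})"

definition ambient_isotopic :: "R3 set \<Rightarrow> R3 set \<Rightarrow> bool" where
  "ambient_isotopic A B \<longleftrightarrow> (\<exists>H :: real \<times> R3 \<Rightarrow> R3.
      continuous_on ({0..1} \<times> UNIV) H \<and>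
      (\<forall>t\<in>{0..1}. \<exists>g. homeomorphism UNIV UNIV (\<lambda>x. H (t, x)) g) \<and>
      (\<forall>x. H (0, x) = x) \<and> (\<lambda>x. H (1, x)) ` A = B)"

definition edge_dir :: "R2 list \<Rightarrow> nat \<Rightarrow> R2" where
  "edge_dir ps i = ps ! ((i + 1) mod length ps) - ps ! i"

definition regular_planar_polygon :: "R2 list \<Rightarrow> bool" where
  "regular_planar_polygon ps \<longleftrightarrow> (let n = length ps in
     n \<ge> 3 \<and>
     (\<forall>i<n. ps ! i \<noteq> ps ! ((i + 1) mod n)) \<and>
     (\<forall>s\<in>{0..<real n}. \<forall>t\<in>{0..<real n}. s \<noteq> t \<and> poly_path ps s = poly_path ps t \<longrightarrow>
        s \<notin> \<int> \<and> t \<notin> \<int> \<and>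
        (let a = edge_dir ps (nat \<lfloor>s\<rfloor>); b = edge_dir ps (nat \<lfloor>t\<rfloor>)
         in fst a * snd b - snd a * fst b \<noteq> 0) \<and>
        (\<forall>u\<in>{0..<real n}. poly_path ps u = poly_path ps s \<longrightarrow> u = s \<or> u = t)))"

definition crossings :: "R2 list \<Rightarrow> R2 set" where
  "crossings ps = {p. \<exists>s\<in>{0..<real (length ps)}. \<exists>t\<in>{0..<real (length ps)}.
      s \<noteq> t \<and> poly_path ps s = p \<and> poly_path ps t = p}"

text \<open>Lift of the planar curve to R^3 using a height function h; the heights at the two
  preimages of a crossing encode the over/under information.\<close>
definition lift :: "R2 list \<Rightarrow> (real \<Rightarrow> real) \<Rightarrow> real \<Rightarrow> R3" where
  "lift ps h t = (fst (poly_path ps t), snd (poly_path ps t), h t)"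

definition stick_diagram_of :: "R3 set \<Rightarrow> R2 list \<Rightarrow> (real \<Rightarrow> real) \<Rightarrow> bool" where
  "stick_diagram_of K ps h \<longleftrightarrow> (let n = real (length ps) in
     regular_planar_polygon ps \<and> continuous_on {0..n} h \<and> h 0 = h n \<and>
     inj_on (lift ps h) {0..<n} \<and> ambient_isotopic K (lift ps h ` {0..n}))"

definition crossing_number :: "R3 set \<Rightarrow> nat" where
  "crossing_number K = (LEAST c. \<exists>ps h. stick_diagram_of K ps h \<and> card (crossings ps) = c)"

definition planar_stick_index :: "R3 set \<Rightarrow> nat" where
  "planar_stick_index K = (LEAST n. \<exists>ps h. stick_diagram_of K ps h \<and> length ps = n)"

end

theory Submission
  imports Defs
begin
definition dir :: "R3 \<Rightarrow> R2" where
  "dir d = (- fst d / snd (snd d), - fst (snd d) / snd (snd d))"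
definition proj :: "real \<Rightarrow> real \<Rightarrow> R3 \<Rightarrow> R2" where
  "proj a b p = (fst p + a * snd (snd p), fst (snd p) + b * snd (snd p))"
definition shear :: "real \<Rightarrow> real \<Rightarrow> R3 \<Rightarrow> R3" where
  "shear a b p = (fst p + a * snd (snd p), fst (snd p) + b * snd (snd p), snd (snd p))"
definition cr3 :: "R3 \<Rightarrow> R3 \<Rightarrow> R3" where
  "cr3 u w = (fst (snd u) * snd (snd w) - snd (snd u) * fst (snd w),
                 snd (snd u) * fst w - fst u * snd (snd w),
                 fst u * fst (snd w) - fst (snd u) * fst w)"
definition det3 :: "R3 \<Rightarrow> R3 \<Rightarrow> R3 \<Rightarrow> real" where
  "det3 u w v = fst (cr3 u w) * fst v + fst (snd (cr3 u w)) * fst (snd v) + snd (snd (cr3 u w)) * snd (snd v)"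
definition cr2 :: "R2 \<Rightarrow> R2 \<Rightarrow> real" where
  "cr2 p q = fst p * snd q - snd p * fst q"
definition vv :: "real \<Rightarrow> real \<Rightarrow> R3" where
  "vv a b = (-a, -b, 1)"

lemma linear_proj: "linear (proj a b)"
  unfolding linear_iff proj_def by (auto simp: algebra_simps)

lemma linear_shear: "linear (shear a b)"
  unfolding linear_iff shear_def by (auto simp: algebra_simps)

lemma proj_diff: "proj a b (p - q) = proj a b p - proj a b q"
  using linear_diff[OF linear_proj] by blast

lemma proj_eq:
  assumes "proj a b P = proj a b Q" "P \<noteq> Q"
  shows "snd (snd (P - Q)) \<noteq> 0" "dir (P - Q) = (a, b)"
proof -
  obtain x y z where P: "P = (x,y,z)" by (cases P) auto
  obtain x' y' z' where Q: "Q = (x',y',z')" by (cases Q) auto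
  have e: "x + a*z = x' + a*z'" "y + b*z = y' + b*z'" using assms(1) by (auto simp: P Q proj_def)
  show z: "snd (snd (P - Q)) \<noteq> 0"
  proof
    assume "snd (snd (P - Q)) = 0"
    then have "z = z'" by (simp add: P Q)
    then show False using e assms(2) by (simp add: P Q)
  qed
  then have "z - z' \<noteq> 0" by (simp add: P Q)
  then show "dir (P - Q) = (a, b)" using e by (simp add: P Q dir_def field_simps)
qed

lemma dir_decomp:
  assumes "snd (snd D) \<noteq> 0" "dir D = (a, b)"
  shows "D = snd (snd D) *\<^sub>R vv a b"
  using assms by (cases D) (auto simp: dir_def vv_def field_simps)

lemma dir_scale: "c \<noteq> 0 \<Longrightarrow> dir (c *\<^sub>R d) = dir d"
  by (cases d) (simp add: dir_def)

lemma dir_neg: "dir (- d) = dir d"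
  by (cases d) (simp add: dir_def)

lemma dir_vv: "dir (vv a b) = (a, b)" by (simp add: dir_def vv_def)

lemma cr2_proj: "cr2 (proj a b u) (proj a b w) = det3 u w (vv a b)"
  by (simp add: cr2_def proj_def det3_def cr3_def vv_def algebra_simps)

lemma cr2_proj': "cr2 (proj a b u) (proj a b w) = snd (snd (cr3 u w)) - a * fst (cr3 u w) - b * fst (snd (cr3 u w))"
  by (simp add: cr2_def proj_def cr3_def algebra_simps)

lemma cross_par:
  assumes "cr3 u w = 0" "u \<noteq> 0"
  shows "\<exists>m. w = m *\<^sub>R u"
proof -
  obtain x y z where u: "u = (x,y,z)" by (cases u) auto
  obtain x' y' z' where w: "w = (x',y',z')" by (cases w) auto
  have e: "y*z' = z*y'" "z*x' = x*z'" "x*y' = y*x'" using assms(1) by (auto simp: u w cr3_def zero_prod_def)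
  consider "x \<noteq> 0" | "y \<noteq> 0" | "z \<noteq> 0" using assms(2) by (auto simp: u zero_prod_def)
  then show ?thesis
  proof cases
    case 1
    show ?thesis by (rule exI[of _ "x'/x"]) (use 1 e in \<open>auto simp: u w field_simps\<close>)
  next
    case 2
    show ?thesis by (rule exI[of _ "y'/y"]) (use 2 e in \<open>auto simp: u w field_simps\<close>)
  next
    case 3
    show ?thesis by (rule exI[of _ "z'/z"]) (use 3 e in \<open>auto simp: u w field_simps\<close>)
  qed
qed

lemma triple_alg:
  assumes "A = -(l *\<^sub>R v) - t *\<^sub>R Ej" "B = -(l' *\<^sub>R v) - r *\<^sub>R Ek"
  shows "cr3 (cr3 Ej A) (cr3 Ek B) = (l * l' * det3 Ej Ek v) *\<^sub>R v"
  using assms by (cases v; cases Ej; cases Ek) (simp add: cr3_def det3_def algebra_simps)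

lemma negl_curve:
  fixes d :: "real \<Rightarrow> R3"
  assumes "\<And>t. d differentiable (at t)"
  shows "negligible ((\<lambda>\<tau>. dir (d \<tau>)) ` {\<tau>. snd (snd (d \<tau>)) \<noteq> 0})"
proof (rule negligible_differentiable_image_lowdim)
  show "DIM(real) < DIM(R2)" by simp
  have fd: "(\<lambda>t. fst (d t)) differentiable (at t)" "(\<lambda>t. fst (snd (d t))) differentiable (at t)"
     "(\<lambda>t. snd (snd (d t))) differentiable (at t)" for t
  proof -
    obtain D where D: "(d has_derivative D) (at t)" using assms[of t] unfolding differentiable_def by blast
    have 1: "((\<lambda>t. snd (d t)) has_derivative (\<lambda>x. snd (D x))) (at t)" using has_derivative_snd[OF D] .
    show "(\<lambda>t. fst (d t)) differentiable (at t)" unfolding differentiable_def using has_derivative_fst[OF D] by blast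
    show "(\<lambda>t. fst (snd (d t))) differentiable (at t)" unfolding differentiable_def using has_derivative_fst[OF 1] by blast
    show "(\<lambda>t. snd (snd (d t))) differentiable (at t)" unfolding differentiable_def using has_derivative_snd[OF 1] by blast
  qed
  show "(\<lambda>\<tau>. dir (d \<tau>)) differentiable_on {\<tau>. snd (snd (d \<tau>)) \<noteq> 0}"
    unfolding differentiable_on_def dir_def
  proof (intro ballI differentiable_Pair)
    fix x assume x: "x \<in> {\<tau>. snd (snd (d \<tau>)) \<noteq> 0}"
    note f1 = differentiable_at_withinI[OF fd(1), of x "{\<tau>. snd (snd (d \<tau>)) \<noteq> 0}"]
    note f2 = differentiable_at_withinI[OF fd(2), of x "{\<tau>. snd (snd (d \<tau>)) \<noteq> 0}"]
    note f3 = differentiable_at_withinI[OF fd(3), of x "{\<tau>. snd (snd (d \<tau>)) \<noteq> 0}"]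
    show "(\<lambda>\<tau>. - fst (d \<tau>) / snd (snd (d \<tau>))) differentiable at x within {\<tau>. snd (snd (d \<tau>)) \<noteq> 0}"
      by (rule differentiable_divide[OF differentiable_minus[OF f1] f3]) (use x in simp)
    show "(\<lambda>\<tau>. - fst (snd (d \<tau>)) / snd (snd (d \<tau>))) differentiable at x within {\<tau>. snd (snd (d \<tau>)) \<noteq> 0}"
      by (rule differentiable_divide[OF differentiable_minus[OF f2] f3]) (use x in simp)
  qed
qed
definition curv :: "(real \<Rightarrow> R3) \<Rightarrow> R2 set" where
  "curv d = (\<lambda>\<tau>. dir (d \<tau>)) ` {\<tau>. snd (snd (d \<tau>)) \<noteq> 0}"

lemma diff_aff: "(\<lambda>\<tau>. (A::R3) + \<tau> *\<^sub>R B) differentiable (at t)"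
  by (intro derivative_intros)

lemma diff_cross_aff: "(\<lambda>\<tau>. cr3 ((A::R3) + \<tau> *\<^sub>R B) (C + \<tau> *\<^sub>R D)) differentiable (at t)"
  unfolding cr3_def by (simp; intro derivative_intros)

lemma negl_UN_lt: "(\<And>i. i < (n::nat) \<Longrightarrow> negligible (F i)) \<Longrightarrow> negligible (\<Union>i<n. F i)"
  by (rule negligible_Union) auto

lemma negl_line:
  assumes "c \<noteq> 0"
  shows "negligible {p::R2. snd (snd c) - fst p * fst c - snd p * fst (snd c) = 0}"
proof (cases "fst c = 0 \<and> fst (snd c) = 0")
  case True
  then have "snd (snd c) \<noteq> 0" using assms by (cases c) (auto simp: zero_prod_def)
  then show ?thesis using True by simp
next
  case False
  have "{p::R2. snd (snd c) - fst p * fst c - snd p * fst (snd c) = 0} = {p. (fst c, fst (snd c)) \<bullet> p = snd (snd c)}"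
    by (auto simp: inner_Pair_0 algebra_simps)
  moreover have "(fst c, fst (snd c)) \<noteq> 0" using False by (simp add: zero_prod_def)
  ultimately show ?thesis using negligible_hyperplane by metis
qed
lemma pp_floor:
  fixes ps :: "'a::real_vector list"
  assumes "ps \<noteq> []" "\<lfloor>t\<rfloor> = int k"
  shows "poly_path ps t = ps!(k mod length ps) + (t - real k) *\<^sub>R (ps!((k mod length ps + 1) mod length ps) - ps!(k mod length ps))"
  using assms by (simp add: poly_path_def Let_def scaleR_diff_left scaleR_diff_right algebra_simps)

lemma pp_in:
  fixes ps :: "'a::real_vector list"
  assumes "t \<in> {0..<real (length ps)}"
  shows "nat \<lfloor>t\<rfloor> < length ps" "\<lfloor>t\<rfloor> = int (nat \<lfloor>t\<rfloor>)"
    "poly_path ps t = ps!(nat \<lfloor>t\<rfloor>) + (t - real (nat \<lfloor>t\<rfloor>)) *\<^sub>R (ps!((nat \<lfloor>t\<rfloor> + 1) mod length ps) - ps!(nat \<lfloor>t\<rfloor>))"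
    "0 \<le> t - real (nat \<lfloor>t\<rfloor>)" "t - real (nat \<lfloor>t\<rfloor>) < 1"
proof -
  have t0: "0 \<le> t" "t < real (length ps)" using assms by auto
  have fl0: "0 \<le> \<lfloor>t\<rfloor>" using t0 by simp
  have rn: "real (nat \<lfloor>t\<rfloor>) = of_int \<lfloor>t\<rfloor>" using fl0 by simp
  have "\<lfloor>t\<rfloor> < int (length ps)" using t0 by (simp add: floor_less_iff)
  then show k: "nat \<lfloor>t\<rfloor> < length ps" using fl0 by (simp add: nat_less_iff)
  show fl: "\<lfloor>t\<rfloor> = int (nat \<lfloor>t\<rfloor>)" using fl0 by simp
  have ne: "ps \<noteq> []" using k by auto
  show "poly_path ps t = ps!(nat \<lfloor>t\<rfloor>) + (t - real (nat \<lfloor>t\<rfloor>)) *\<^sub>R (ps!((nat \<lfloor>t\<rfloor> + 1) mod length ps) - ps!(nat \<lfloor>t\<rfloor>))"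
    using pp_floor[OF ne fl] k by simp
  have fc: "of_int \<lfloor>t\<rfloor> \<le> t" "t < of_int \<lfloor>t\<rfloor> + 1" using floor_correct[of t] by auto
  show "0 \<le> t - real (nat \<lfloor>t\<rfloor>)" "t - real (nat \<lfloor>t\<rfloor>) < 1" using fc rn by linarith+
qed

lemma pp_map:
  fixes f :: "'a::real_vector \<Rightarrow> 'b::real_vector"
  assumes "linear f" "ps \<noteq> []"
  shows "poly_path (map f ps) t = f (poly_path ps t)"
  using assms by (simp add: poly_path_def Let_def linear_add linear_scale)

lemma pp_int:
  fixes ps :: "'a::real_vector list"
  assumes "k < length ps"
  shows "poly_path ps (real k) = ps!k"
  using assms by (simp add: poly_path_def Let_def)

lemma pp_end:
  fixes ps :: "'a::real_vector list"
  assumes "ps \<noteq> []"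
  shows "poly_path ps (real (length ps)) = poly_path ps 0"
  using assms by (simp add: poly_path_def Let_def)

lemma pp_cont_piece:
  fixes ps :: "'a::real_normed_vector list"
  assumes "ps \<noteq> []"
  shows "continuous_on {real k..real (Suc k)} (poly_path ps)"
proof -
  let ?n = "length ps"
  let ?g = "\<lambda>t. ps!(k mod ?n) + (t - real k) *\<^sub>R (ps!((k mod ?n + 1) mod ?n) - ps!(k mod ?n))"
  have eqs: "poly_path ps t = ?g t" if "t \<in> {real k..real (Suc k)}" for t
  proof (cases "t = real (Suc k)")
    case True
    have nk: "nat (1 + int k) = Suc k" by simp
    have "poly_path ps t = ps!(Suc k mod ?n)" using True assms
      by (simp add: poly_path_def Let_def nk)
    also have "\<dots> = ?g t" using True by (simp add: mod_Suc_eq)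
    finally show ?thesis .
  next
    case False
    have tl: "real k \<le> t" "t < real k + 1" using that False by auto
    have "\<lfloor>t\<rfloor> = int k" by (rule floor_unique) (use tl in auto)
    then show ?thesis using pp_floor[OF assms] by simp
  qed
  have cg: "continuous_on {real k..real (Suc k)} ?g" by (intro continuous_intros)
  show ?thesis by (rule continuous_on_eq[OF cg]) (simp add: eqs)
qed

lemma pp_cont:
  fixes ps :: "'a::real_normed_vector list"
  assumes "ps \<noteq> []"
  shows "continuous_on {0..real m} (poly_path ps)"
proof (induction m)
  case 0
  then show ?case by simp
next
  case (Suc m)
  have "{0..real (Suc m)} = {0..real m} \<union> {real m..real (Suc m)}" by auto
  then show ?case using continuous_on_closed_Un[OF _ _ Suc pp_cont_piece[OF assms, of m]] by simp
qed

definition EE :: "R3 list \<Rightarrow> nat \<Rightarrow> R3" where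
  "EE qs i = qs ! ((i + 1) mod length qs) - qs ! i"

definition L3 :: "R3 list \<Rightarrow> nat \<Rightarrow> nat \<Rightarrow> R2 set" where
  "L3 qs i j = curv (\<lambda>\<tau>. (qs!i - qs!j) + \<tau> *\<^sub>R (- EE qs j))"
definition L4 :: "R3 list \<Rightarrow> nat \<Rightarrow> nat \<Rightarrow> R2 set" where
  "L4 qs i j = curv (\<lambda>\<tau>. (qs!i - qs!j) + \<tau> *\<^sub>R EE qs i)"
definition L2 :: "R3 list \<Rightarrow> nat \<Rightarrow> nat \<Rightarrow> R2 set" where
  "L2 qs i j = (let c = cr3 (EE qs i) (EE qs j) in
     if c = 0 then {} else {p. snd (snd c) - fst p * fst c - snd p * fst (snd c) = 0})"
definition L5 :: "R3 list \<Rightarrow> nat \<Rightarrow> nat \<Rightarrow> nat \<Rightarrow> R2 set" where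
  "L5 qs i j k = curv (\<lambda>\<sigma>. cr3 (cr3 (EE qs j) ((qs!j - qs!i) + \<sigma> *\<^sub>R (- EE qs i)))
                                 (cr3 (EE qs k) ((qs!k - qs!i) + \<sigma> *\<^sub>R (- EE qs i))))"

definition BAD :: "R3 list \<Rightarrow> R2 set" where
  "BAD qs = (\<Union>i<length qs. \<Union>j<length qs. L3 qs i j \<union> L4 qs i j \<union> L2 qs i j \<union> (\<Union>k<length qs. L5 qs i j k))"

lemma negl_curv: "(\<And>t. d differentiable (at t)) \<Longrightarrow> negligible (curv d)"
  unfolding curv_def by (rule negl_curve)

lemma diff_cc: "(\<lambda>\<tau>. cr3 (cr3 P ((A::R3) + \<tau> *\<^sub>R B)) (cr3 Q (C + \<tau> *\<^sub>R D))) differentiable (at t)"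
  unfolding cr3_def by (simp; intro derivative_intros)

lemma negl_BAD: "negligible (BAD qs)"
  unfolding BAD_def
  apply (intro negl_UN_lt negligible_Un)
  subgoal unfolding L3_def by (intro negl_curv diff_aff)
  subgoal unfolding L4_def by (intro negl_curv diff_aff)
  subgoal unfolding L2_def Let_def using negl_line by auto
  subgoal unfolding L5_def by (intro negl_curv diff_cc)
  done

lemma curvI: "snd (snd (d \<tau>)) \<noteq> 0 \<Longrightarrow> dir (d \<tau>) = p \<Longrightarrow> p \<in> curv d"
  unfolding curv_def by (rule image_eqI[of _ _ \<tau>]) auto

lemma BAD_I:
  assumes "i < length qs" "j < length qs"
  shows "p \<in> L3 qs i j \<Longrightarrow> p \<in> BAD qs" "p \<in> L4 qs i j \<Longrightarrow> p \<in> BAD qs"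
    "p \<in> L2 qs i j \<Longrightarrow> p \<in> BAD qs" "k < length qs \<Longrightarrow> p \<in> L5 qs i j k \<Longrightarrow> p \<in> BAD qs"
  using assms unfolding BAD_def by blast+

lemma Ints_real_nat: "s \<in> \<int> \<Longrightarrow> 0 \<le> s \<Longrightarrow> real (nat \<lfloor>s\<rfloor>) = s"
  by (metis Ints_cases floor_of_int nat_0_le of_int_0_le_iff of_int_of_nat_eq)

lemma EE_ne:
  assumes inj: "inj_on (poly_path qs) {0..<real (length qs)}" and n3: "length qs \<ge> 3" and i: "i < length qs"
  shows "EE qs i \<noteq> 0"
proof
  assume "EE qs i = 0"
  let ?i' = "(i+1) mod length qs"
  have i': "?i' < length qs" using n3 by (intro mod_less_divisor) linarith
  have ne: "?i' \<noteq> i"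
  proof (cases "i + 1 < length qs")
    case True then show ?thesis by simp
  next
    case False
    then have "i + 1 = length qs" using i by simp
    then show ?thesis using n3 by simp
  qed
  have "poly_path qs (real i) = poly_path qs (real ?i')"
    using \<open>EE qs i = 0\<close> pp_int[OF i] pp_int[OF i'] by (simp add: EE_def)
  then have "real i = real ?i'" using inj i i' by (auto dest: inj_onD)
  then show False using ne by simp
qed

lemma pair_lemma:
  assumes inj: "inj_on (poly_path qs) {0..<real (length qs)}" and n3: "length qs \<ge> 3"
    and nb: "(a, b) \<notin> BAD qs"
    and s: "s \<in> {0..<real (length qs)}" and t: "t \<in> {0..<real (length qs)}" and st: "s \<noteq> t"
    and eq: "proj a b (poly_path qs s) = proj a b (poly_path qs t)"
  shows "s \<notin> \<int>" "t \<notin> \<int>" "cr2 (proj a b (EE qs (nat \<lfloor>s\<rfloor>))) (proj a b (EE qs (nat \<lfloor>t\<rfloor>))) \<noteq> 0"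
proof -
  define i where "i = nat \<lfloor>s\<rfloor>"
  define j where "j = nat \<lfloor>t\<rfloor>"
  define \<sigma> where "\<sigma> = s - real i"
  define \<tau> where "\<tau> = t - real j"
  have i: "i < length qs" and j: "j < length qs" using pp_in(1)[OF s] pp_in(1)[OF t] by (auto simp: i_def j_def)
  have P: "poly_path qs s = qs!i + \<sigma> *\<^sub>R EE qs i" using pp_in(3)[OF s] by (simp add: i_def \<sigma>_def EE_def)
  have Q: "poly_path qs t = qs!j + \<tau> *\<^sub>R EE qs j" using pp_in(3)[OF t] by (simp add: j_def \<tau>_def EE_def)
  have PQ: "poly_path qs s \<noteq> poly_path qs t" using inj s t st by (auto dest: inj_onD)
  define D where "D = poly_path qs s - poly_path qs t"
  have Dz: "snd (snd D) \<noteq> 0" and Dd: "dir D = (a, b)" using proj_eq[OF eq PQ] by (auto simp: D_def)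
  show "s \<notin> \<int>"
  proof
    assume "s \<in> \<int>"
    then have "\<sigma> = 0" using s by (simp add: \<sigma>_def i_def Ints_real_nat)
    then have "D = (qs!i - qs!j) + \<tau> *\<^sub>R (- EE qs j)" by (simp add: D_def P Q)
    then have "(a,b) \<in> L3 qs i j" unfolding L3_def using Dz Dd by (intro curvI[of _ \<tau>]) auto
    then show False using nb BAD_I(1)[OF i j] by blast
  qed
  show "t \<notin> \<int>"
  proof
    assume "t \<in> \<int>"
    then have "\<tau> = 0" using t by (simp add: \<tau>_def j_def Ints_real_nat)
    then have eqD: "- D = (qs!j - qs!i) + \<sigma> *\<^sub>R (- EE qs i)" by (simp add: D_def P Q)
    have "snd (snd (- D)) \<noteq> 0" using Dz by simp
    then have dz: "snd (snd ((qs!j - qs!i) + \<sigma> *\<^sub>R (- EE qs i))) \<noteq> 0" unfolding eqD .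
    have dd: "dir ((qs!j - qs!i) + \<sigma> *\<^sub>R (- EE qs i)) = (a, b)" using Dd by (simp only: eqD[symmetric] dir_neg)
    have "(a,b) \<in> L3 qs j i" unfolding L3_def by (rule curvI[of _ \<sigma>], fact dz, fact dd)
    then show False using nb BAD_I(1)[OF j i] by blast
  qed
  show "cr2 (proj a b (EE qs (nat \<lfloor>s\<rfloor>))) (proj a b (EE qs (nat \<lfloor>t\<rfloor>))) \<noteq> 0"
  proof
    assume c0: "cr2 (proj a b (EE qs (nat \<lfloor>s\<rfloor>))) (proj a b (EE qs (nat \<lfloor>t\<rfloor>))) = 0"
    define c where "c = cr3 (EE qs i) (EE qs j)"
    show False
    proof (cases "c = 0")
      case False
      have "(a,b) \<in> L2 qs i j" using False c0 unfolding L2_def Let_def c_def[symmetric]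
        by (simp add: cr2_proj' i_def j_def c_def)
      then show False using nb BAD_I(3)[OF i j] by blast
    next
      case True
      obtain m where m: "EE qs j = m *\<^sub>R EE qs i"
        using cross_par[OF True[unfolded c_def] EE_ne[OF inj n3 i]] by blast
      have "D = (qs!i - qs!j) + (\<sigma> - \<tau> * m) *\<^sub>R EE qs i"
        by (simp add: D_def P Q m algebra_simps)
      then have "(a,b) \<in> L4 qs i j" unfolding L4_def using Dz Dd by (intro curvI[of _ "\<sigma> - \<tau> * m"]) auto
      then show False using nb BAD_I(2)[OF i j] by blast
    qed
  qed
qed

lemma edge_dir_map:
  assumes "i < length qs"
  shows "edge_dir (map (proj a b) qs) i = proj a b (EE qs i)"
proof -
  have "(i + 1) mod length qs < length qs" using assms by (intro mod_less_divisor) linarith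
  then show ?thesis using assms by (simp add: edge_dir_def EE_def proj_diff)
qed

lemma regular_proj:
  assumes inj: "inj_on (poly_path qs) {0..<real (length qs)}" and n3: "length qs \<ge> 3"
    and nb: "(a, b) \<notin> BAD qs"
  shows "regular_planar_polygon (map (proj a b) qs)"
proof -
  let ?n = "length qs"
  let ?ps = "map (proj a b) qs"
  have ne: "qs \<noteq> []" using n3 by auto
  have ppm: "poly_path ?ps t = proj a b (poly_path qs t)" for t using pp_map[OF linear_proj ne] .
  have c2: "\<forall>i<?n. ?ps ! i \<noteq> ?ps ! ((i + 1) mod ?n)"
  proof (intro allI impI)
    fix i assume i: "i < ?n"
    show "?ps ! i \<noteq> ?ps ! ((i + 1) mod ?n)"
    proof
      assume e: "?ps ! i = ?ps ! ((i + 1) mod ?n)"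
      have i': "(i + 1) mod ?n < ?n" using ne by simp
      have e2: "proj a b (qs!i) = proj a b (qs!((i+1) mod ?n))" using e i i' by simp
      have "qs!i \<noteq> qs!((i+1) mod ?n)" using EE_ne[OF inj n3 i] by (simp add: EE_def)
      note pe = proj_eq[OF e2 this]
      have "qs!i - qs!((i+1) mod ?n) = (qs!i - qs!i) + 1 *\<^sub>R (- EE qs i)" by (simp add: EE_def)
      then have "(a,b) \<in> L3 qs i i" unfolding L3_def using pe by (intro curvI[of _ 1]) auto
      then show False using nb BAD_I(1)[OF i i] by blast
    qed
  qed
  have c3: "s \<notin> \<int> \<and> t \<notin> \<int> \<and>
        fst (edge_dir ?ps (nat \<lfloor>s\<rfloor>)) * snd (edge_dir ?ps (nat \<lfloor>t\<rfloor>)) - snd (edge_dir ?ps (nat \<lfloor>s\<rfloor>)) * fst (edge_dir ?ps (nat \<lfloor>t\<rfloor>)) \<noteq> 0 \<and>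
        (\<forall>u\<in>{0..<real ?n}. poly_path ?ps u = poly_path ?ps s \<longrightarrow> u = s \<or> u = t)"
    if s: "s \<in> {0..<real ?n}" and t: "t \<in> {0..<real ?n}" and st: "s \<noteq> t" and eq0: "poly_path ?ps s = poly_path ?ps t" for s t
  proof -
    have eq: "proj a b (poly_path qs s) = proj a b (poly_path qs t)" using eq0 ppm by simp
    note pl = pair_lemma[OF inj n3 nb s t st eq]
    have i: "nat \<lfloor>s\<rfloor> < ?n" and j: "nat \<lfloor>t\<rfloor> < ?n" using pp_in(1)[OF s] pp_in(1)[OF t] by auto
    have cr: "fst (edge_dir ?ps (nat \<lfloor>s\<rfloor>)) * snd (edge_dir ?ps (nat \<lfloor>t\<rfloor>)) - snd (edge_dir ?ps (nat \<lfloor>s\<rfloor>)) * fst (edge_dir ?ps (nat \<lfloor>t\<rfloor>)) \<noteq> 0"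
      using pl(3) unfolding edge_dir_map[OF i] edge_dir_map[OF j] cr2_def .
    have tr: "u = s \<or> u = t" if u: "u \<in> {0..<real ?n}" and eu0: "poly_path ?ps u = poly_path ?ps s" for u
    proof (rule ccontr)
      assume "\<not> (u = s \<or> u = t)"
      then have us: "u \<noteq> s" and ut: "u \<noteq> t" by auto
      have eu: "proj a b (poly_path qs s) = proj a b (poly_path qs u)" using eu0 ppm by simp
      have etu: "proj a b (poly_path qs t) = proj a b (poly_path qs u)" using eu eq by simp
      note pl2 = pair_lemma(3)[OF inj n3 nb t u ut[symmetric] etu]
      define i where "i = nat \<lfloor>s\<rfloor>"
      define j where "j = nat \<lfloor>t\<rfloor>"
      define k where "k = nat \<lfloor>u\<rfloor>"
      define \<sigma> where "\<sigma> = s - real i"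
      define \<tau> where "\<tau> = t - real j"
      define \<rho> where "\<rho> = u - real k"
      have ii: "i < ?n" and jj: "j < ?n" and kk: "k < ?n"
        using pp_in(1)[OF s] pp_in(1)[OF t] pp_in(1)[OF u] by (auto simp: i_def j_def k_def)
      have P: "poly_path qs s = qs!i + \<sigma> *\<^sub>R EE qs i" using pp_in(3)[OF s] by (simp add: i_def \<sigma>_def EE_def)
      have Q: "poly_path qs t = qs!j + \<tau> *\<^sub>R EE qs j" using pp_in(3)[OF t] by (simp add: j_def \<tau>_def EE_def)
      have R: "poly_path qs u = qs!k + \<rho> *\<^sub>R EE qs k" using pp_in(3)[OF u] by (simp add: k_def \<rho>_def EE_def)
      have PQ: "poly_path qs s \<noteq> poly_path qs t" using inj s t st by (auto dest: inj_onD)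
      have PR: "poly_path qs s \<noteq> poly_path qs u" using inj s u us by (auto dest: inj_onD)
      define D1 where "D1 = poly_path qs s - poly_path qs t"
      define D2 where "D2 = poly_path qs s - poly_path qs u"
      have D1z: "snd (snd D1) \<noteq> 0" and D1d: "dir D1 = (a, b)" using proj_eq[OF eq PQ] by (auto simp: D1_def)
      have D2z: "snd (snd D2) \<noteq> 0" and D2d: "dir D2 = (a, b)" using proj_eq[OF eu PR] by (auto simp: D2_def)
      have D1v: "D1 = snd (snd D1) *\<^sub>R vv a b" using dir_decomp[OF D1z D1d] .
      have D2v: "D2 = snd (snd D2) *\<^sub>R vv a b" using dir_decomp[OF D2z D2d] .
      have A1: "(qs!j - qs!i) + \<sigma> *\<^sub>R (- EE qs i) = - (snd (snd D1) *\<^sub>R vv a b) - \<tau> *\<^sub>R EE qs j"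
        using D1v by (simp add: D1_def P Q algebra_simps)
      have A2: "(qs!k - qs!i) + \<sigma> *\<^sub>R (- EE qs i) = - (snd (snd D2) *\<^sub>R vv a b) - \<rho> *\<^sub>R EE qs k"
        using D2v by (simp add: D2_def P R algebra_simps)
      define \<kappa> where "\<kappa> = snd (snd D1) * snd (snd D2) * det3 (EE qs j) (EE qs k) (vv a b)"
      have det0: "det3 (EE qs j) (EE qs k) (vv a b) \<noteq> 0" using pl2 cr2_proj by (simp add: j_def k_def)
      have \<kappa>0: "\<kappa> \<noteq> 0" using det0 D1z D2z by (simp add: \<kappa>_def)
      have W: "cr3 (cr3 (EE qs j) ((qs!j - qs!i) + \<sigma> *\<^sub>R (- EE qs i)))
                      (cr3 (EE qs k) ((qs!k - qs!i) + \<sigma> *\<^sub>R (- EE qs i))) = \<kappa> *\<^sub>R vv a b"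
        unfolding \<kappa>_def by (rule triple_alg[OF A1 A2])
      have z1: "snd (snd (\<kappa> *\<^sub>R vv a b)) \<noteq> 0" using \<kappa>0 by (simp add: vv_def)
      have d1: "dir (\<kappa> *\<^sub>R vv a b) = (a,b)" using dir_scale[OF \<kappa>0] dir_vv by simp
      have "(a,b) \<in> L5 qs i j k" unfolding L5_def
        apply (rule curvI[of _ \<sigma>])
         apply (subst W, rule z1)
        apply (subst W, rule d1)
        done
      then show False using nb BAD_I(4)[OF ii jj kk] by blast
    qed
    have tr': "\<forall>u\<in>{0..<real ?n}. poly_path ?ps u = poly_path ?ps s \<longrightarrow> u = s \<or> u = t"
      using tr by blast
    show ?thesis using pl(1) pl(2) cr tr' by (intro conjI)
  qed
  show ?thesis unfolding regular_planar_polygon_def Let_def length_map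
  proof (intro conjI)
    show "3 \<le> ?n" by fact
    show "\<forall>i<?n. ?ps ! i \<noteq> ?ps ! ((i + 1) mod ?n)" by fact
    show "\<forall>s\<in>{0..<real ?n}. \<forall>t\<in>{0..<real ?n}. s \<noteq> t \<and> poly_path ?ps s = poly_path ?ps t \<longrightarrow>
        s \<notin> \<int> \<and> t \<notin> \<int> \<and>
        fst (edge_dir ?ps (nat \<lfloor>s\<rfloor>)) * snd (edge_dir ?ps (nat \<lfloor>t\<rfloor>)) - snd (edge_dir ?ps (nat \<lfloor>s\<rfloor>)) * fst (edge_dir ?ps (nat \<lfloor>t\<rfloor>)) \<noteq> 0 \<and>
        (\<forall>u\<in>{0..<real ?n}. poly_path ?ps u = poly_path ?ps s \<longrightarrow> u = s \<or> u = t)"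
      using c3 by blast
  qed
qed

lemma shear_inv: "shear c d (shear (-c) (-d) x) = x" "shear (-c) (-d) (shear c d x) = x"
  by (cases x; simp add: shear_def algebra_simps)+

lemma shear_0: "shear 0 0 x = x" by (cases x) (simp add: shear_def)

lemma cont_shear: "continuous_on S (shear c d)"
  unfolding shear_def by (intro continuous_intros)

lemma shear_inj: "inj (shear c d)"
  by (metis injI shear_inv(2))

lemma ambient_shear: "ambient_isotopic A (shear a b ` A)"
  unfolding ambient_isotopic_def
proof (intro exI[of _ "\<lambda>p. shear (fst p * a) (fst p * b) (snd p)"] conjI ballI allI)
  show "continuous_on ({0..1} \<times> UNIV) (\<lambda>p::real \<times> R3. shear (fst p * a) (fst p * b) (snd p))"
    unfolding shear_def by (intro continuous_intros)
  fix t :: real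
  show "\<exists>g. homeomorphism UNIV UNIV (\<lambda>x. shear (fst (t, x) * a) (fst (t, x) * b) (snd (t, x))) g"
    by (rule exI[of _ "shear (-(t*a)) (-(t*b))"], rule homeomorphismI)
       (auto simp: cont_shear shear_inv)
next
  fix x :: R3
  show "shear (fst (0::real, x) * a) (fst (0::real, x) * b) (snd (0::real, x)) = x" by (simp add: shear_0)
next
  show "(\<lambda>x. shear (fst (1::real, x) * a) (fst (1::real, x) * b) (snd (1::real, x))) ` A = shear a b ` A" by simp
qed

lemma lift_eq:
  assumes "qs \<noteq> []"
  shows "lift (map (proj a b) qs) (\<lambda>t. snd (snd (poly_path qs t))) t = shear a b (poly_path qs t)"
  using pp_map[OF linear_proj assms] by (simp add: lift_def proj_def shear_def)

lemma exists_diagram: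
  assumes "polygonal_knot K"
  shows "\<exists>ps h. stick_diagram_of K ps h"
proof -
  obtain qs :: "R3 list" where n3: "length qs \<ge> 3" and inj: "inj_on (poly_path qs) {0..<real (length qs)}"
    and K: "K = poly_path qs ` {0..real (length qs)}"
    using assms unfolding polygonal_knot_def by blast
  have ne: "qs \<noteq> []" using n3 by auto
  have "BAD qs \<noteq> UNIV" using negl_BAD[of qs] by auto
  then obtain a b where nb: "(a, b) \<notin> BAD qs" by auto
  define ps where "ps = map (proj a b) qs"
  define h where "h = (\<lambda>t. snd (snd (poly_path qs t)))"
  have L: "lift ps h t = shear a b (poly_path qs t)" for t unfolding ps_def h_def by (rule lift_eq[OF ne])
  have len: "length ps = length qs" by (simp add: ps_def)
  have "stick_diagram_of K ps h"
    unfolding stick_diagram_of_def Let_def len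
  proof (intro conjI)
    show "regular_planar_polygon ps" unfolding ps_def by (rule regular_proj[OF inj n3 nb])
    show "continuous_on {0..real (length qs)} h" unfolding h_def
      by (intro continuous_on_snd pp_cont[OF ne])
    show "h 0 = h (real (length qs))" unfolding h_def using pp_end[OF ne] by simp
    show "inj_on (lift ps h) {0..<real (length qs)}"
    proof (rule inj_onI)
      fix x y assume x: "x \<in> {0..<real (length qs)}" and y: "y \<in> {0..<real (length qs)}"
        and e: "lift ps h x = lift ps h y"
      have "poly_path qs x = poly_path qs y" using e injD[OF shear_inj] unfolding L by blast
      then show "x = y" using inj x y by (auto dest: inj_onD)
    qed
    have "lift ps h ` {0..real (length qs)} = shear a b ` K"
      unfolding L K by (simp add: image_image)
    then show "ambient_isotopic K (lift ps h ` {0..real (length qs)})" using ambient_shear by simp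
  qed
  then show ?thesis by blast
qed

lemma cr2_scale: "cr2 (c *\<^sub>R u) w = c * cr2 u w" "cr2 u (c *\<^sub>R w) = c * cr2 u w" "cr2 w w = 0"
  by (simp_all add: cr2_def algebra_simps)

lemma meet_once:
  fixes A B u w :: R2
  assumes "cr2 u w \<noteq> 0" "A + \<sigma> *\<^sub>R u = B + \<tau> *\<^sub>R w" "A + \<sigma>' *\<^sub>R u = B + \<tau>' *\<^sub>R w"
  shows "\<sigma> = \<sigma>'"
proof -
  have "(\<sigma> - \<sigma>') *\<^sub>R u = (\<tau> - \<tau>') *\<^sub>R w" using assms(2,3)
    by (simp add: scaleR_diff_left) (metis (no_types, lifting) add_diff_cancel_left' add_diff_eq diff_add_eq_diff_diff_swap diff_diff_eq2)
  then have "cr2 ((\<sigma> - \<sigma>') *\<^sub>R u) w = cr2 ((\<tau> - \<tau>') *\<^sub>R w) w" by simp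
  then have "(\<sigma> - \<sigma>') * cr2 u w = 0" by (simp add: cr2_scale)
  then show ?thesis using assms(1) by simp
qed

lemma not_adj_alg:
  fixes A u w :: R2
  assumes "cr2 u w \<noteq> 0" "A + \<sigma> *\<^sub>R u = (A + u) + \<tau> *\<^sub>R w"
  shows "\<sigma> = 1"
  using meet_once[OF assms(1) assms(2), of 1 0] by simp

lemma reg_pair:
  assumes reg: "regular_planar_polygon ps"
    and s: "s \<in> {0..<real (length ps)}" and t: "t \<in> {0..<real (length ps)}" and st: "s \<noteq> t"
    and e: "poly_path ps s = poly_path ps t"
  shows "s \<notin> \<int>" "t \<notin> \<int>" "cr2 (edge_dir ps (nat \<lfloor>s\<rfloor>)) (edge_dir ps (nat \<lfloor>t\<rfloor>)) \<noteq> 0"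
  using assms unfolding regular_planar_polygon_def Let_def cr2_def by blast+

lemma on_edge:
  fixes ps :: "R2 list"
  assumes s: "s \<in> {0..<real (length ps)}"
  shows "poly_path ps s = ps ! (nat \<lfloor>s\<rfloor>) + (s - real (nat \<lfloor>s\<rfloor>)) *\<^sub>R edge_dir ps (nat \<lfloor>s\<rfloor>)"
  using pp_in(3)[OF s] by (simp add: edge_dir_def)

lemma floor_ne:
  assumes reg: "regular_planar_polygon ps"
    and s: "s \<in> {0..<real (length ps)}" and t: "t \<in> {0..<real (length ps)}" and st: "s \<noteq> t"
    and e: "poly_path ps s = poly_path ps t"
  shows "nat \<lfloor>s\<rfloor> \<noteq> nat \<lfloor>t\<rfloor>"
  using reg_pair(3)[OF assms] cr2_scale(3) by metis

lemma not_adj: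
  assumes reg: "regular_planar_polygon ps"
    and s: "s \<in> {0..<real (length ps)}" and t: "t \<in> {0..<real (length ps)}" and st: "s \<noteq> t"
    and e: "poly_path ps s = poly_path ps t"
  shows "nat \<lfloor>t\<rfloor> \<noteq> (nat \<lfloor>s\<rfloor> + 1) mod length ps"
proof
  assume j: "nat \<lfloor>t\<rfloor> = (nat \<lfloor>s\<rfloor> + 1) mod length ps"
  let ?i = "nat \<lfloor>s\<rfloor>" and ?j = "nat \<lfloor>t\<rfloor>"
  have vj: "ps ! ?j = ps ! ?i + edge_dir ps ?i" using j by (simp add: edge_dir_def)
  have "ps ! ?i + (s - real ?i) *\<^sub>R edge_dir ps ?i = (ps ! ?i + edge_dir ps ?i) + (t - real ?j) *\<^sub>R edge_dir ps ?j"
    using e on_edge[OF s] on_edge[OF t] vj by simp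
  then have "s - real ?i = 1" by (rule not_adj_alg[OF reg_pair(3)[OF assms]])
  then show False using pp_in(5)[OF s] by simp
qed

definition pick :: "R2 list \<Rightarrow> R2 \<Rightarrow> real \<times> real" where
  "pick ps p = (SOME st. fst st \<in> {0..<real (length ps)} \<and> snd st \<in> {0..<real (length ps)} \<and>
     fst st \<noteq> snd st \<and> poly_path ps (fst st) = p \<and> poly_path ps (snd st) = p)"

lemma pick:
  assumes "p \<in> crossings ps"
  shows "fst (pick ps p) \<in> {0..<real (length ps)} \<and> snd (pick ps p) \<in> {0..<real (length ps)} \<and>
     fst (pick ps p) \<noteq> snd (pick ps p) \<and> poly_path ps (fst (pick ps p)) = p \<and> poly_path ps (snd (pick ps p)) = p"
proof -
  obtain s t where "s \<in> {0..<real (length ps)}" "t \<in> {0..<real (length ps)}" "s \<noteq> t"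
    "poly_path ps s = p" "poly_path ps t = p" using assms unfolding crossings_def by blast
  then have "\<exists>st. fst st \<in> {0..<real (length ps)} \<and> snd st \<in> {0..<real (length ps)} \<and>
     fst st \<noteq> snd st \<and> poly_path ps (fst st) = p \<and> poly_path ps (snd st) = p"
    by (intro exI[of _ "(s,t)"]) simp
  then show ?thesis unfolding pick_def by (rule someI_ex)
qed

lemma same_pair:
  assumes reg: "regular_planar_polygon ps"
    and s: "s \<in> {0..<real (length ps)}" and t: "t \<in> {0..<real (length ps)}" and st: "s \<noteq> t"
    and e: "poly_path ps s = poly_path ps t"
    and s2: "s2 \<in> {0..<real (length ps)}" and t2: "t2 \<in> {0..<real (length ps)}"
    and e2: "poly_path ps s2 = poly_path ps t2"
    and fs: "nat \<lfloor>s\<rfloor> = nat \<lfloor>s2\<rfloor>" and ft: "nat \<lfloor>t\<rfloor> = nat \<lfloor>t2\<rfloor>"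
  shows "poly_path ps s = poly_path ps s2"
proof -
  let ?i = "nat \<lfloor>s\<rfloor>" and ?j = "nat \<lfloor>t\<rfloor>"
  have a1: "ps ! ?i + (s - real ?i) *\<^sub>R edge_dir ps ?i = ps ! ?j + (t - real ?j) *\<^sub>R edge_dir ps ?j"
    using e on_edge[OF s] on_edge[OF t] by simp
  have a2: "ps ! ?i + (s2 - real ?i) *\<^sub>R edge_dir ps ?i = ps ! ?j + (t2 - real ?j) *\<^sub>R edge_dir ps ?j"
    using e2 on_edge[OF s2] on_edge[OF t2] fs ft by simp
  have "s - real ?i = s2 - real ?i" by (rule meet_once[OF reg_pair(3)[OF reg s t st e] a1 a2])
  then show ?thesis using on_edge[OF s] on_edge[OF s2] fs by simp
qed

lemma mod_prev:
  assumes "i < (n::nat)" 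
  shows "(i + n - 1) mod n = (if i = 0 then n - 1 else i - 1)"
proof (cases "i = 0")
  case True then show ?thesis using assms by simp
next
  case False
  have e: "i + n - 1 = (i - 1) + n" using False by simp
  have "(i + n - 1) mod n = ((i - 1) + n) mod n" by (simp only: e)
  also have "\<dots> = (i - 1) mod n" by (rule mod_add_self2)
  also have "\<dots> = i - 1" using assms by simp
  finally show ?thesis using False by simp
qed

lemma mod_next:
  assumes "i < (n::nat)"
  shows "(i + 1) mod n = (if i = n - 1 then 0 else i + 1)"
  using assms by (cases "i + 1 < n") auto

lemma card_J:
  assumes n3: "(n::nat) \<ge> 3" and i: "i < n"
  shows "card ({..<n} - {i, (i + 1) mod n, (i + n - 1) mod n}) = n - 3"
proof -
  have d: "i \<noteq> (i + 1) mod n" "i \<noteq> (i + n - 1) mod n" "(i + 1) mod n \<noteq> (i + n - 1) mod n"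
    using n3 i unfolding mod_prev[OF i] mod_next[OF i] by auto
  have sub: "{i, (i + 1) mod n, (i + n - 1) mod n} \<subseteq> {..<n}" using i n3 by auto
  have c3: "card {i, (i + 1) mod n, (i + n - 1) mod n} = 3" using d by simp
  show ?thesis using card_Diff_subset[OF _ sub] c3 by simp
qed

lemma card_B:
  assumes n3: "(n::nat) \<ge> 3"
  shows "card {(i, j). i < n \<and> j < n \<and> i \<noteq> j \<and> j \<noteq> (i + 1) mod n \<and> i \<noteq> (j + 1) mod n} \<le> n * (n - 3)"
proof -
  let ?J = "\<lambda>i. {..<n} - {i, (i + 1) mod n, (i + n - 1) mod n}"
  have sub: "{(i, j). i < n \<and> j < n \<and> i \<noteq> j \<and> j \<noteq> (i + 1) mod n \<and> i \<noteq> (j + 1) mod n} \<subseteq> Sigma {..<n} ?J"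
  proof
    fix x assume "x \<in> {(i, j). i < n \<and> j < n \<and> i \<noteq> j \<and> j \<noteq> (i + 1) mod n \<and> i \<noteq> (j + 1) mod n}"
    then obtain i j where x: "x = (i, j)" and i: "i < n" and j: "j < n" and ij: "i \<noteq> j"
      and nij: "j \<noteq> (i + 1) mod n" and ji: "i \<noteq> (j + 1) mod n" by blast
    have jp: "j \<noteq> (i + n - 1) mod n"
    proof
      assume "j = (i + n - 1) mod n"
      then have "j = (if i = 0 then n - 1 else i - 1)" by (simp only: mod_prev[OF i])
      then have "(j + 1) mod n = i" using i n3 by (auto split: if_splits)
      then show False using ji by simp
    qed
    show "x \<in> Sigma {..<n} ?J" using x i j ij nij jp by auto
  qed
  have "card (Sigma {..<n} ?J) = (\<Sum>i<n. card (?J i))" by (rule card_SigmaI) auto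
  also have "\<dots> = (\<Sum>i<n. n - 3)" using card_J[OF n3] by simp
  also have "\<dots> = n * (n - 3)" by simp
  finally have cs: "card (Sigma {..<n} ?J) = n * (n - 3)" .
  have fin: "finite (Sigma {..<n} ?J)" by (intro finite_SigmaI) auto
  show ?thesis using card_mono[OF fin sub] cs by simp
qed

lemma crossings_bound:
  assumes reg: "regular_planar_polygon ps"
  shows "2 * card (crossings ps) \<le> length ps * (length ps - 3)"
proof -
  let ?n = "length ps"
  have n3: "?n \<ge> 3" using reg unfolding regular_planar_polygon_def Let_def by simp
  let ?B = "{(i, j). i < ?n \<and> j < ?n \<and> i \<noteq> j \<and> j \<noteq> (i + 1) mod ?n \<and> i \<noteq> (j + 1) mod ?n}"
  define G where "G = (\<lambda>(p, \<beta>::bool). if \<beta> then (nat \<lfloor>fst (pick ps p)\<rfloor>, nat \<lfloor>snd (pick ps p)\<rfloor>)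
                                    else (nat \<lfloor>snd (pick ps p)\<rfloor>, nat \<lfloor>fst (pick ps p)\<rfloor>))"
  have inB: "(nat \<lfloor>s\<rfloor>, nat \<lfloor>t\<rfloor>) \<in> ?B" if s: "s \<in> {0..<real ?n}" and t: "t \<in> {0..<real ?n}"
    and st: "s \<noteq> t" and e: "poly_path ps s = poly_path ps t" for s t
    using pp_in(1)[OF s] pp_in(1)[OF t] floor_ne[OF reg s t st e] not_adj[OF reg s t st e]
      not_adj[OF reg t s st[symmetric] e[symmetric]] by simp
  have img: "G ` (crossings ps \<times> UNIV) \<subseteq> ?B"
  proof
    fix x assume "x \<in> G ` (crossings ps \<times> UNIV)"
    then obtain p \<beta> where p: "p \<in> crossings ps" and x: "x = G (p, \<beta>)" by auto
    note pk = pick[OF p]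
    have e: "poly_path ps (fst (pick ps p)) = poly_path ps (snd (pick ps p))" using pk by simp
    show "x \<in> ?B" unfolding x
      using inB[of "fst (pick ps p)" "snd (pick ps p)"] inB[of "snd (pick ps p)" "fst (pick ps p)"] pk e
      unfolding G_def by auto
  qed
  have inj: "inj_on G (crossings ps \<times> UNIV)"
  proof (rule inj_onI)
    fix x y assume x: "x \<in> crossings ps \<times> (UNIV::bool set)" and y: "y \<in> crossings ps \<times> (UNIV::bool set)"
      and eq0: "G x = G y"
    obtain p \<beta> where xd: "x = (p, \<beta>)" by (cases x)
    obtain p' \<beta>' where yd: "y = (p', \<beta>')" by (cases y)
    have p: "p \<in> crossings ps" using x xd by simp
    have p': "p' \<in> crossings ps" using y yd by simp
    have eq: "G (p, \<beta>) = G (p', \<beta>')" using eq0 xd yd by simp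
    note pk = pick[OF p] and pk' = pick[OF p']
    define s where "s = fst (pick ps p)"
    define t where "t = snd (pick ps p)"
    define s' where "s' = fst (pick ps p')"
    define t' where "t' = snd (pick ps p')"
    have S: "s \<in> {0..<real ?n}" "t \<in> {0..<real ?n}" "s \<noteq> t" "poly_path ps s = p" "poly_path ps t = p"
      using pk by (auto simp: s_def t_def)
    have S': "s' \<in> {0..<real ?n}" "t' \<in> {0..<real ?n}" "s' \<noteq> t'" "poly_path ps s' = p'" "poly_path ps t' = p'"
      using pk' by (auto simp: s'_def t'_def)
    have fne: "nat \<lfloor>s\<rfloor> \<noteq> nat \<lfloor>t\<rfloor>" using floor_ne[OF reg S(1,2,3)] S(4,5) by simp
    have case1: "p = p'" if "nat \<lfloor>s\<rfloor> = nat \<lfloor>s'\<rfloor>" "nat \<lfloor>t\<rfloor> = nat \<lfloor>t'\<rfloor>"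
    proof -
      have "poly_path ps s = poly_path ps s'"
        by (rule same_pair[OF reg S(1,2,3) _ S'(1,2) _ that]) (use S S' in simp_all)
      then show ?thesis using S(4) S'(4) by simp
    qed
    have case2: "p = p'" if "nat \<lfloor>s\<rfloor> = nat \<lfloor>t'\<rfloor>" "nat \<lfloor>t\<rfloor> = nat \<lfloor>s'\<rfloor>"
    proof -
      have "poly_path ps s = poly_path ps t'"
        by (rule same_pair[OF reg S(1,2,3) _ S'(2,1) _ that]) (use S S' in simp_all)
      then show ?thesis using S(4) S'(5) by simp
    qed
    have G1: "G (p, True) = (nat \<lfloor>s\<rfloor>, nat \<lfloor>t\<rfloor>)" "G (p, False) = (nat \<lfloor>t\<rfloor>, nat \<lfloor>s\<rfloor>)"
      unfolding G_def s_def t_def by simp_all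
    have G2: "G (p', True) = (nat \<lfloor>s'\<rfloor>, nat \<lfloor>t'\<rfloor>)" "G (p', False) = (nat \<lfloor>t'\<rfloor>, nat \<lfloor>s'\<rfloor>)"
      unfolding G_def s'_def t'_def by simp_all
    have "p = p' \<and> \<beta> = \<beta>'"
    proof (cases \<beta>; cases \<beta>')
      assume b: "\<beta>" "\<beta>'"
      have f: "nat \<lfloor>s\<rfloor> = nat \<lfloor>s'\<rfloor>" "nat \<lfloor>t\<rfloor> = nat \<lfloor>t'\<rfloor>" using eq G1 G2 b by simp_all
      show ?thesis using case1[OF f] b by simp
    next
      assume b: "\<not> \<beta>" "\<not> \<beta>'"
      have f: "nat \<lfloor>s\<rfloor> = nat \<lfloor>s'\<rfloor>" "nat \<lfloor>t\<rfloor> = nat \<lfloor>t'\<rfloor>" using eq G1 G2 b by simp_all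
      show ?thesis using case1[OF f] b by simp
    next
      assume b: "\<beta>" "\<not> \<beta>'"
      have f: "nat \<lfloor>s\<rfloor> = nat \<lfloor>t'\<rfloor>" "nat \<lfloor>t\<rfloor> = nat \<lfloor>s'\<rfloor>" using eq G1 G2 b by simp_all
      have pp: "p = p'" using case2[OF f] .
      have "s' = s" "t' = t" unfolding s_def t_def s'_def t'_def pp by simp_all
      then show ?thesis using f fne by simp
    next
      assume b: "\<not> \<beta>" "\<beta>'"
      have f: "nat \<lfloor>s\<rfloor> = nat \<lfloor>t'\<rfloor>" "nat \<lfloor>t\<rfloor> = nat \<lfloor>s'\<rfloor>" using eq G1 G2 b by simp_all
      have pp: "p = p'" using case2[OF f] .
      have "s' = s" "t' = t" unfolding s_def t_def s'_def t'_def pp by simp_all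
      then show ?thesis using f fne by simp
    qed
    then show "x = y" using xd yd by simp
  qed
  have finB: "finite ?B"
    by (rule finite_subset[of _ "{..<?n} \<times> {..<?n}"]) auto
  have "card (crossings ps \<times> (UNIV :: bool set)) \<le> card ?B"
    by (rule card_inj_on_le[OF inj img finB])
  moreover have "card (crossings ps \<times> (UNIV :: bool set)) = 2 * card (crossings ps)"
    by (simp add: card_cartesian_product)
  ultimately show ?thesis using card_B[OF n3] by linarith
qed

theorem theorem2p2:
  fixes K :: "R3 set"
  assumes "polygonal_knot K"
  shows "(3 + sqrt (9 + 8 * real (crossing_number K))) / 2 \<le> real (planar_stick_index K)"
proof -
  obtain ps0 h0 where d0: "stick_diagram_of K ps0 h0" using exists_diagram[OF assms] by blast
  have "\<exists>ps h. stick_diagram_of K ps h \<and> length ps = length ps0" using d0 by blast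
  then have "\<exists>ps h. stick_diagram_of K ps h \<and> length ps = planar_stick_index K"
    unfolding planar_stick_index_def by (rule LeastI)
  then obtain ps h where d: "stick_diagram_of K ps h" and len: "length ps = planar_stick_index K" by blast
  have reg: "regular_planar_polygon ps" using d unfolding stick_diagram_of_def Let_def by simp
  have n3: "length ps \<ge> 3" using reg unfolding regular_planar_polygon_def Let_def by simp
  have cle: "crossing_number K \<le> card (crossings ps)"
    unfolding crossing_number_def by (rule Least_le) (use d in blast)
  define N where "N = planar_stick_index K"
  define c where "c = crossing_number K"
  have N3: "N \<ge> 3" using n3 len by (simp add: N_def)
  have "2 * c \<le> N * (N - 3)" using crossings_bound[OF reg] cle len by (simp add: N_def c_def)
  then have "real (2 * c) \<le> real (N * (N - 3))" by (simp only: of_nat_le_iff)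
  then have h1: "2 * real c \<le> real N * (real N - 3)" using N3 by (simp add: of_nat_diff)
  have h2: "9 + 8 * real c \<le> (2 * real N - 3)^2" using h1 by (simp add: power2_eq_square algebra_simps)
  have pos: "0 \<le> 2 * real N - 3" using N3 by simp
  have "sqrt (9 + 8 * real c) \<le> sqrt ((2 * real N - 3)^2)" using h2 by (rule real_sqrt_le_mono)
  also have "\<dots> = 2 * real N - 3" using pos by simp
  finally have "sqrt (9 + 8 * real c) \<le> 2 * real N - 3" .
  then show ?thesis by (simp add: N_def c_def)
qed

end
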